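(* Let $A$ be a non-trivial finite group and $m$ an odd positive integer with $\gcd(|A|,m)=1$. Let $B$ be a maximal subgroup of $A$ with $\psi(B)\ge\psi(B')$ for every maximal subgroup $B'$ of $A$. (i) If $\psi(A)/\psi(B)\le 7$, then $B\times\mathcal{C}_m$ is a maximal subgroup of $A\times\mathcal{C}_m$ attaining the maximum value of $\psi$ among the maximal subgroups (equivalently, among all proper subgroups) of $A\times\mathcal{C}_m$. (ii) If $B$ is cyclic and $|A:B|=2$, then $\psi(A)/\psi(B)\le7$, so the conclusion of (i) holds.
   Context: $\psi(G)=\sum_{x\in G}o(x)$ for a finite group $G$; $\mathcal{C}_n$ is the cyclic group of order $n$. *)

theory Defs
  imports "HOL-Algebra.Algebra"
begin

definition psi :: "('a, 'b) monoid_scheme \<Rightarrow> nat" where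
  "psi G = (\<Sum>x\<in>carrier G. group.ord G x)"

definition maximal_subgroup :: "'a set \<Rightarrow> ('a, 'b) monoid_scheme \<Rightarrow> bool" where
  "maximal_subgroup H G \<longleftrightarrow> subgroup H G \<and> H \<noteq> carrier G \<and>
     (\<forall>K. subgroup K G \<and> H \<subseteq> K \<longrightarrow> K = H \<or> K = carrier G)"

abbreviation Cyc :: "nat \<Rightarrow> int monoid" where
  "Cyc m \<equiv> integer_mod_group m"

end

theory Submission
  imports Defs
begin

lemma ord_sub: assumes "group G" "subgroup H G"
  shows "group.ord (G\<lparr>carrier := H\<rparr>) x = group.ord G x"
proof -
  have "group (G\<lparr>carrier := H\<rparr>)" using assms subgroup.subgroup_is_group by blast
  then show ?thesis using assms by (simp add: group.ord_def nat_pow_def)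
qed

lemma dvd_mult_gcd_iff: fixes m n x :: nat assumes "m > 0"
  shows "m dvd n * x \<longleftrightarrow> (m div gcd m x) dvd n"
  by (smt (verit) assms div_dvd_iff_mult dvd_0_right dvd_triv_right
    gcd_left_idem gcd_mult_distrib_nat gcd_nat.bounded_iff gcd_nat.order_iff
    less_nat_zero_code)

lemma gcd_cases: fixes p n a :: nat assumes "Factorial_Ring.prime p"
  shows "gcd (p*n) a = gcd n a \<or> gcd (p*n) a = p * gcd n a"
proof (cases "gcd n a = 0")
  case True then show ?thesis by simp
next
  case False
  define g where "g = gcd n a"
  define h where "h = gcd (p*n) a"
  have "g dvd h" unfolding g_def h_def by simp
  then obtain e where e: "h = g * e" by blast
  have "h dvd gcd (p*n) (p*a)" unfolding h_def by simp
  also have "gcd (p*n) (p*a) = p * g" unfolding g_def by (simp add: gcd_mult_distrib_nat)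
  finally have "g * e dvd g * p" using e by (simp add: mult.commute)
  then have "e dvd p" using False g_def by auto
  then have "e = 1 \<or> e = p" using assms by (simp add: prime_nat_iff)
  then show ?thesis using e g_def h_def by auto
qed

lemma at_most_one: fixes p n y :: nat assumes "Factorial_Ring.prime p" "y < n"
  and "t1 < p" "t2 < p" "p * gcd n y dvd y + n * t1" "p * gcd n y dvd y + n * t2" "t1 \<le> t2"
  shows "t1 = t2"
proof -
  define g where "g = gcd n y"
  have g0: "g > 0" using assms g_def by simp
  obtain n' where n': "n = g * n'" unfolding g_def by (metis gcd_dvd1 dvdE)
  obtain y' where y': "y = g * y'" unfolding g_def by (metis gcd_dvd2 dvdE)
  have cop: "coprime n' y'" using n' y' g0 g_def
    by (metis gcd_mult_distrib_nat mult.right_neutral coprime_iff_gcd_eq_1 nat_mult_eq_cancel1)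
  have e1: "y + n*t1 = (y' + n'*t1) * g" "y + n*t2 = (y' + n'*t2) * g" by (simp_all add: n' y' algebra_simps)
  have d1: "p dvd y' + n' * t1" using assms(5) e1 dvd_mult_cancel2[OF g0, of p] g_def assms(2) by auto
  have d2: "p dvd y' + n' * t2" using assms(6) e1 dvd_mult_cancel2[OF g0, of p] g_def assms(2) by auto
  have "\<not> p dvd n'"
  proof
    assume "p dvd n'"
    then have "p dvd n' * t1" by simp
    then have "p dvd y'" using d1 by (simp add: dvd_add_left_iff)
    then show False using \<open>p dvd n'\<close> cop assms(1)
      by (metis coprime_common_divisor not_prime_unit)
  qed
  have "p dvd (y' + n' * t2) - (y' + n' * t1)" using d2 d1 by (rule dvd_diff_nat)
  also have "(y' + n' * t2) - (y' + n' * t1) = n' * (t2 - t1)" by (simp add: diff_mult_distrib2)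
  finally have "p dvd t2 - t1" using \<open>\<not> p dvd n'\<close> assms(1) prime_dvd_mult_iff by blast
  moreover have "t2 - t1 < p" using assms by linarith
  ultimately have "t2 - t1 = 0" using dvd_imp_le by fastforce
  then show ?thesis using assms(7) by simp
qed

lemma fiber_bound: fixes p n y :: nat assumes "Factorial_Ring.prime p" "3 \<le> p" "y < n"
  shows "7 * (n div gcd n y) \<le> (\<Sum>t<p. (p*n) div gcd (p*n) (y + n*t))"
proof -
  define g where "g = gcd n y"
  define q where "q = n div g"
  have g0: "g > 0" using assms g_def by simp
  have nq: "n = g * q" unfolding q_def g_def by simp
  define S where "S = {t \<in> {..<p}. p*g dvd y+n*t}"
  have tm: "(p*n) div gcd (p*n) (y + n*t) = (if t \<in> S then q else p*q)" if "t < p" for t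
  proof -
    have gg: "gcd n (y + n*t) = g" unfolding g_def using gcd_add_mult[of n t y] by (simp add: add.commute mult.commute)
    have "gcd (p*n) (y + n*t) = g \<or> gcd (p*n) (y + n*t) = p * g"
      using gcd_cases[OF assms(1), of n "y+n*t"] gg by simp
    then show ?thesis
    proof
      assume h: "gcd (p*n) (y + n*t) = g"
      have "\<not> p*g dvd y+n*t"
      proof
        assume "p*g dvd y+n*t"
        moreover have "p*g dvd p*n" using nq by simp
        ultimately have "p*g dvd g" using h by (metis gcd_greatest)
        then have "p*g \<le> g" using g0 dvd_imp_le by blast
        moreover have "3*g \<le> p*g" using assms(2) by simp
        ultimately show False using g0 by linarith
      qed
      then show ?thesis using h that nq g0 by (simp add: S_def)
    next
      assume h: "gcd (p*n) (y + n*t) = p*g"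
      have "p*g dvd y+n*t" using h by (metis gcd_dvd2)
      then show ?thesis using h that nq g0 assms(2) by (simp add: S_def)
    qed
  qed
  have cS: "card S \<le> 1"
  proof -
    have "\<forall>a1\<in>S. \<forall>a2\<in>S. a1 = a2"
    proof (intro ballI)
      fix a1 a2 assume a: "a1 \<in> S" "a2 \<in> S"
      show "a1 = a2"
      proof (cases "a1 \<le> a2")
        case True then show ?thesis using at_most_one[OF assms(1) assms(3), of a1 a2] a by (simp add: S_def g_def)
      next
        case False then show ?thesis using at_most_one[OF assms(1) assms(3), of a2 a1] a by (simp add: S_def g_def)
      qed
    qed
    then show ?thesis using card_le_Suc0_iff_eq[of S] by (simp add: S_def)
  qed
  have SS: "S \<subseteq> {..<p}" unfolding S_def by auto
  have "(\<Sum>t<p. (p*n) div gcd (p*n) (y + n*t)) = (\<Sum>t<p. (if t \<in> S then q else p*q))"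
    using tm by (intro sum.cong) auto
  also have "\<dots> = (\<Sum>t\<in>S. q) + (\<Sum>t\<in>{..<p} - S. p*q)"
    using sum.If_cases[of "{..<p}" "\<lambda>t. t \<in> S" "\<lambda>_. q" "\<lambda>_. p*q"] SS
    by (simp add: Diff_eq Int_absorb1)
  also have "\<dots> = card S * q + (p - card S) * (p * q)"
    using SS by (simp add: card_Diff_subset finite_subset)
  finally have eq: "(\<Sum>t<p. (p*n) div gcd (p*n) (y + n*t)) = card S * q + (p - card S) * (p * q)" .
  have "7 * q \<le> card S * q + (p - card S) * (p * q)"
  proof (cases "card S = 0")
    case True
    have "3 * (3 * q) \<le> p * (p * q)" using assms(2) by (intro mult_le_mono) auto
    then have "7 * q \<le> p * (p * q)" by linarith
    then show ?thesis using True by simp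
  next
    case False
    then have c1: "card S = 1" using cS by simp
    have "6 * q \<le> (p - 1) * (p * q)"
    proof -
      have "2 \<le> p - 1" using assms(2) by simp
      have "6 * q = 2 * (3 * q)" by simp
      also have "\<dots> \<le> (p - 1) * (p * q)" using \<open>2 \<le> p - 1\<close> assms(2) by (intro mult_le_mono) auto
      finally show ?thesis .
    qed
    then show ?thesis using c1 by simp
  qed
  then show ?thesis using eq q_def g_def by simp
qed

lemma f_bound: fixes p n :: nat assumes "Factorial_Ring.prime p" "3 \<le> p"
  shows "7 * (\<Sum>y<n. n div gcd n y) \<le> (\<Sum>x<p*n. (p*n) div gcd (p*n) x)"
proof -
  define F where "F = (\<lambda>x. (p*n) div gcd (p*n) x)"
  have "(\<Sum>x<p*n. F x) = (\<Sum>t<p. sum F {t*n..<t*n+n})"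
    using sum.nat_group[of F n p] by simp
  also have "\<dots> = (\<Sum>t<p. \<Sum>y<n. F (y + n*t))"
  proof -
    have "sum F {t*n..<t*n+n} = (\<Sum>y<n. F (y + n*t))" for t
    proof -
      have "sum F {0 + t*n..<n + t*n} = (\<Sum>i\<in>{0..<n}. F (i + t*n))"
        by (rule sum.shift_bounds_nat_ivl)
      then show ?thesis
        by (simp add: add.commute mult.commute atLeast0LessThan)
    qed
    then show ?thesis by simp
  qed
  also have "\<dots> = (\<Sum>y<n. \<Sum>t<p. F (y + n*t))" by (rule sum.swap)
  finally have eq: "(\<Sum>x<p*n. F x) = (\<Sum>y<n. \<Sum>t<p. F (y + n*t))" .
  have "7 * (\<Sum>y<n. n div gcd n y) = (\<Sum>y<n. 7 * (n div gcd n y))" by (simp add: sum_distrib_left)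
  also have "\<dots> \<le> (\<Sum>y<n. \<Sum>t<p. F (y + n*t))"
    using fiber_bound[OF assms] by (intro sum_mono) (simp add: F_def)
  finally show ?thesis using eq by (simp add: F_def)
qed

lemma ord_Cyc: assumes "m > 0" "x \<in> carrier (Cyc m)"
  shows "group.ord (Cyc m) x = m div gcd m (nat x)"
proof -
  have x0: "0 \<le> x" using assms by (simp add: carrier_integer_mod_group)
  have "\<forall>n::nat. x [^]\<^bsub>Cyc m\<^esub> n = \<one>\<^bsub>Cyc m\<^esub> \<longleftrightarrow> (m div gcd m (nat x)) dvd n"
  proof
    fix n :: nat
    have "x [^]\<^bsub>Cyc m\<^esub> n = \<one>\<^bsub>Cyc m\<^esub> \<longleftrightarrow> int m dvd int n * x" by (simp add: dvd_eq_mod_eq_0)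
    also have "\<dots> \<longleftrightarrow> m dvd n * nat x" using x0
      by (metis int_dvd_int_iff int_nat_eq of_nat_mult)
    also have "\<dots> \<longleftrightarrow> (m div gcd m (nat x)) dvd n" using dvd_mult_gcd_iff assms(1) by blast
    finally show "x [^]\<^bsub>Cyc m\<^esub> n = \<one>\<^bsub>Cyc m\<^esub> \<longleftrightarrow> (m div gcd m (nat x)) dvd n" .
  qed
  then show ?thesis using group.ord_unique[OF group_integer_mod_group assms(2)] by blast
qed

lemma carrier_Cyc: "m > 0 \<Longrightarrow> carrier (Cyc m) = int ` {..<m}"
  by (simp add: carrier_integer_mod_group image_int_atLeastLessThan lessThan_atLeast0)

lemma psi_Cyc: assumes "m > 0" shows "psi (Cyc m) = (\<Sum>x<m. m div gcd m x)"
proof -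
  have "psi (Cyc m) = (\<Sum>x\<in>int ` {..<m}. group.ord (Cyc m) x)"
    unfolding psi_def using carrier_Cyc[OF assms] by simp
  also have "\<dots> = (\<Sum>x<m. group.ord (Cyc m) (int x))"
    by (simp add: sum.reindex)
  also have "\<dots> = (\<Sum>x<m. m div gcd m x)"
    using ord_Cyc[OF assms] carrier_Cyc[OF assms] by (intro sum.cong) auto
  finally show ?thesis .
qed

lemma psi_Cyc_sub: assumes "m > 0" "odd m" "subgroup H (Cyc m)" "H \<noteq> carrier (Cyc m)"
  shows "7 * psi ((Cyc m)\<lparr>carrier := H\<rparr>) \<le> psi (Cyc m)"
proof -
  interpret C: group "Cyc m" by simp
  have finC: "finite (carrier (Cyc m))" using carrier_Cyc[OF assms(1)] by simp
  have cardC: "card (carrier (Cyc m)) = m" using carrier_Cyc[OF assms(1)] by (simp add: card_image)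
  have Hsub: "H \<subseteq> carrier (Cyc m)" using assms(3) subgroup.subset by blast
  have finH: "finite H" using finC Hsub finite_subset by blast
  define d where "d = card H"
  have "card (rcosets\<^bsub>Cyc m\<^esub> H) * d = m" using C.lagrange[OF assms(3)] cardC d_def by (simp add: order_def)
  then have dm: "d dvd m" by (metis dvd_triv_right)
  have "H \<subset> carrier (Cyc m)" using Hsub assms(4) by auto
  then have "card H < card (carrier (Cyc m))" by (rule psubset_card_mono[OF finC])
  then have "d < m" using cardC d_def by simp
  have d0: "d > 0" using dm assms(1) by (metis dvd_0_left_iff gr0I less_nat_zero_code)
  have "m div d \<noteq> 1" using \<open>d < m\<close> dm by (metis div_mult_self1_is_m d0 dvd_mult_div_cancel mult.right_neutral nat_neq_iff)
  then obtain p where p: "Factorial_Ring.prime p" "p dvd m div d" using prime_factor_nat by blast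
  have "m div d dvd m" using dm by (metis dvd_mult_div_cancel dvd_triv_right)
  then have pm: "p dvd m" using p(2) by (rule dvd_trans[rotated])
  have "p \<noteq> 2" using pm assms(2) by auto
  then have p3: "3 \<le> p" using p(1) prime_ge_2_nat by (metis le_antisym not_less_eq_eq numeral_2_eq_2 numeral_3_eq_3)
  define n where "n = m div p"
  have mpn: "m = p * n" using pm n_def by simp
  have n0: "n > 0" using mpn assms(1) by (metis gr0I mult_0_right less_irrefl_nat)
  have dn: "d dvd n"
  proof -
    obtain k where "m div d = p * k" using p(2) by blast
    then have "m = d * (p * k)" using dm by (metis dvd_mult_div_cancel)
    then have "n = d * k" using mpn p(1) by (metis mult.left_commute mult_cancel_left prime_gt_0_nat not_gr0)
    then show ?thesis by simp
  qed
  have inH: "int p dvd x" if "x \<in> H" for x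
  proof -
    interpret Hg: group "(Cyc m)\<lparr>carrier := H\<rparr>" using assms(3) subgroup.subgroup_is_group by blast
    have "group.ord (Cyc m) x dvd d"
      using Hg.ord_dvd_group_order[of x] that ord_sub[OF C.is_group assms(3)] d_def by (simp add: order_def)
    then have "group.ord (Cyc m) x dvd n" using dn by (rule dvd_trans)
    then have "x [^]\<^bsub>Cyc m\<^esub> n = \<one>\<^bsub>Cyc m\<^esub>" using C.pow_eq_id that Hsub by blast
    then have "int m dvd int n * x" by (simp add: dvd_eq_mod_eq_0)
    then have "int n * int p dvd int n * x" using mpn by (simp add: mult.commute)
    then show ?thesis using n0 by simp
  qed
  define T where "T = (\<lambda>y. int (p * y)) ` {..<n}"
  have HT: "H \<subseteq> T"
  proof
    fix x assume x: "x \<in> H"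
    then obtain k where k: "x = int p * k" using inH by blast
    have x0: "0 \<le> x" "x < int m" using x Hsub assms(1) by (auto simp: carrier_integer_mod_group)
    have "0 \<le> k" using k x0 p(1) by (metis prime_gt_0_nat of_nat_0_less_iff zero_le_mult_iff not_le)
    moreover have "k < int n" using k x0 mpn p(1)
      by (metis of_nat_mult mult_less_cancel_left_pos prime_gt_0_nat of_nat_0_less_iff)
    ultimately show "x \<in> T" unfolding T_def using k
      by (metis (no_types, lifting) imageI lessThan_iff nat_less_iff of_nat_mult int_nat_eq)
  qed
  have TC: "T \<subseteq> carrier (Cyc m)"
  proof
    fix x assume "x \<in> T"
    then obtain y where y: "y < n" "x = int (p*y)" unfolding T_def by auto
    have "p*y < p*n" using y(1) p(1) prime_gt_0_nat by simp
    then show "x \<in> carrier (Cyc m)" using y(2) mpn carrier_Cyc[OF assms(1)] by blast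
  qed
  have "psi ((Cyc m)\<lparr>carrier := H\<rparr>) = (\<Sum>x\<in>H. group.ord (Cyc m) x)"
    unfolding psi_def using ord_sub[OF C.is_group assms(3)] by simp
  also have "\<dots> \<le> (\<Sum>x\<in>T. group.ord (Cyc m) x)"
    using HT by (intro sum_mono2) (auto simp: T_def)
  also have "\<dots> = (\<Sum>y<n. group.ord (Cyc m) (int (p*y)))"
    unfolding T_def by (subst sum.reindex) (use p3 in \<open>auto simp: inj_on_def\<close>)
  also have "\<dots> = (\<Sum>y<n. n div gcd n y)"
  proof (intro sum.cong refl)
    fix y assume y: "y \<in> {..<n}"
    have "int (p*y) \<in> carrier (Cyc m)" using TC y unfolding T_def by auto
    then have "group.ord (Cyc m) (int (p*y)) = m div gcd m (p*y)" using ord_Cyc[OF assms(1)] by (simp add: nat_times_as_int[symmetric] del: of_nat_mult)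
    also have "\<dots> = (p*n) div (p * gcd n y)" using mpn by (simp add: gcd_mult_distrib_nat)
    also have "\<dots> = n div gcd n y" using p(1) prime_gt_0_nat by simp
    finally show "group.ord (Cyc m) (int (p*y)) = n div gcd n y" .
  qed
  finally have "7 * psi ((Cyc m)\<lparr>carrier := H\<rparr>) \<le> 7 * (\<Sum>y<n. n div gcd n y)" by simp
  also have "\<dots> \<le> (\<Sum>x<p*n. (p*n) div gcd (p*n) x)" by (rule f_bound[OF p(1) p3])
  also have "\<dots> = psi (Cyc m)" using psi_Cyc[OF assms(1)] mpn by simp
  finally show ?thesis .
qed

lemma DirProd_pow: "(a, c) [^]\<^bsub>G \<times>\<times> K\<^esub> (n::nat) = (a [^]\<^bsub>G\<^esub> n, c [^]\<^bsub>K\<^esub> n)"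
  by (induct n) simp_all

lemma ord_pair:
  assumes "group G" "group K" "a \<in> carrier G" "c \<in> carrier K"
  shows "group.ord (G \<times>\<times> K) (a, c) = lcm (group.ord G a) (group.ord K c)"
proof -
  interpret P: group "G \<times>\<times> K" using assms DirProd_group by blast
  show ?thesis
    using assms by (simp add: P.ord_unique DirProd_pow group.pow_eq_id)
qed

lemma psi_sub: assumes "group G" "subgroup H G"
  shows "psi (G\<lparr>carrier := H\<rparr>) = (\<Sum>x\<in>H. group.ord G x)"
  unfolding psi_def using ord_sub[OF assms] by simp

lemma pow_lin: assumes "group G" "x \<in> carrier G" "x [^]\<^bsub>G\<^esub> (n::nat) = \<one>\<^bsub>G\<^esub>"
  shows "x [^]\<^bsub>G\<^esub> (n*y + 1) = x"
proof -
  interpret group G by fact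
  have "x [^]\<^bsub>G\<^esub> (n*y + 1) = (x [^]\<^bsub>G\<^esub> n) [^]\<^bsub>G\<^esub> y \<otimes>\<^bsub>G\<^esub> x [^]\<^bsub>G\<^esub> (1::nat)"
    using assms(2) by (simp add: nat_pow_mult[symmetric] nat_pow_pow)
  then show ?thesis using assms by simp
qed

lemma fst_hom: "group A \<Longrightarrow> group C \<Longrightarrow> fst \<in> hom (A \<times>\<times> C) A"
  by (auto simp: hom_def mult_DirProd')
lemma snd_hom: "group A \<Longrightarrow> group C \<Longrightarrow> snd \<in> hom (A \<times>\<times> C) C"
  by (auto simp: hom_def mult_DirProd')

lemma sub_fst: assumes "group A" "group C" "subgroup H (A \<times>\<times> C)" shows "subgroup (fst ` H) A"
proof -
  interpret group_hom "A \<times>\<times> C" A fst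
    unfolding group_hom_def group_hom_axioms_def using assms fst_hom DirProd_group by blast
  show ?thesis using subgroup_img_is_subgroup[OF assms(3)] .
qed

lemma sub_snd: assumes "group A" "group C" "subgroup H (A \<times>\<times> C)" shows "subgroup (snd ` H) C"
proof -
  interpret group_hom "A \<times>\<times> C" C snd
    unfolding group_hom_def group_hom_axioms_def using assms snd_hom DirProd_group by blast
  show ?thesis using subgroup_img_is_subgroup[OF assms(3)] .
qed

lemma sub_pow_closed: assumes "group G" "subgroup H G" "x \<in> H" shows "x [^]\<^bsub>G\<^esub> (n::nat) \<in> H"
proof -
  interpret G: group G by fact
  interpret Hg: group "G\<lparr>carrier := H\<rparr>" using assms subgroup.subgroup_is_group by blast
  have "x [^]\<^bsub>G\<lparr>carrier := H\<rparr>\<^esub> n \<in> H" using assms(3) Hg.nat_pow_closed by simp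
  then show ?thesis using G.nat_pow_consistent by metis
qed

lemma prod_decomp:
  fixes A :: "('a, 'b) monoid_scheme"
  assumes "group A" "finite (carrier A)" "m > 0" "coprime (card (carrier A)) m"
    "subgroup H (A \<times>\<times> Cyc m)"
  shows "H = fst ` H \<times> snd ` H"
proof
  show "H \<subseteq> fst ` H \<times> snd ` H"
  proof
    fix z assume "z \<in> H"
    then show "z \<in> fst ` H \<times> snd ` H" by (metis SigmaI imageI prod.collapse)
  qed
next
  interpret A: group A by fact
  interpret C: group "Cyc m" by simp
  interpret P: group "A \<times>\<times> Cyc m" using DirProd_group[OF assms(1) group_integer_mod_group] by simp
  define N where "N = card (carrier A)"
  have N0: "N \<noteq> 0" using assms(2) A.one_closed N_def by auto
  have Hs: "H \<subseteq> carrier A \<times> carrier (Cyc m)" using assms(5) subgroup.subset by force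
  have ordC: "c [^]\<^bsub>Cyc m\<^esub> m = \<one>\<^bsub>Cyc m\<^esub>" if "c \<in> carrier (Cyc m)" for c
    using that by (simp add: carrier_integer_mod_group)
  have ordA: "a [^]\<^bsub>A\<^esub> N = \<one>\<^bsub>A\<^esub>" if "a \<in> carrier A" for a
    using A.pow_order_eq_1[OF that] N_def by (simp add: order_def)
  obtain x y where xy: "m * x = N * y + gcd m N" using bezout_nat[of m N] assms(3) by blast
  obtain u v where uv: "N * u = m * v + gcd N m" using bezout_nat[of N m] N0 by blast
  have g1: "gcd m N = 1" "gcd N m = 1" using assms(4) N_def by (simp_all add: coprime_iff_gcd_eq_1 gcd.commute)
  show "fst ` H \<times> snd ` H \<subseteq> H"
  proof
    fix z assume "z \<in> fst ` H \<times> snd ` H"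
    then obtain a c a' c' where z: "z = (a, c')" "(a, c) \<in> H" "(a', c') \<in> H" by force
    have ac: "a \<in> carrier A" "c \<in> carrier (Cyc m)" "a' \<in> carrier A" "c' \<in> carrier (Cyc m)"
      using z Hs by auto
    have "(a, c) [^]\<^bsub>A \<times>\<times> Cyc m\<^esub> (m*x) = (a, \<one>\<^bsub>Cyc m\<^esub>)"
    proof -
      have "a [^]\<^bsub>A\<^esub> (m*x) = a" using xy g1 pow_lin[OF assms(1) ac(1) ordA[OF ac(1)]] by simp
      moreover have "c [^]\<^bsub>Cyc m\<^esub> (m*x) = \<one>\<^bsub>Cyc m\<^esub>"
        using ordC[OF ac(2)] ac(2) by (simp add: C.nat_pow_pow[symmetric])
      ultimately show ?thesis by (simp add: DirProd_pow)
    qed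
    note e1 = this
    have "(a', c') [^]\<^bsub>A \<times>\<times> Cyc m\<^esub> (N*u) = (\<one>\<^bsub>A\<^esub>, c')"
    proof -
      have "c' [^]\<^bsub>Cyc m\<^esub> (N*u) = c'" using uv g1 pow_lin[OF C.is_group ac(4) ordC[OF ac(4)]] by simp
      moreover have "a' [^]\<^bsub>A\<^esub> (N*u) = \<one>\<^bsub>A\<^esub>"
        using ordA[OF ac(3)] ac(3) by (simp add: A.nat_pow_pow[symmetric])
      ultimately show ?thesis by (simp add: DirProd_pow)
    qed
    note e2 = this
    have "(a, \<one>\<^bsub>Cyc m\<^esub>) \<in> H" using sub_pow_closed[OF P.is_group assms(5) z(2), of "m*x"] e1 by simp
    moreover have "(\<one>\<^bsub>A\<^esub>, c') \<in> H" using sub_pow_closed[OF P.is_group assms(5) z(3), of "N*u"] e2 by simp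
    ultimately have "(a, \<one>\<^bsub>Cyc m\<^esub>) \<otimes>\<^bsub>A \<times>\<times> Cyc m\<^esub> (\<one>\<^bsub>A\<^esub>, c') \<in> H"
      by (rule subgroup.m_closed[OF assms(5)])
    then show "z \<in> H" using z ac assms(3) by (simp add: carrier_integer_mod_group)
  qed
qed

lemma order_Cyc: "m > 0 \<Longrightarrow> order (Cyc m) = m"
  using carrier_Cyc by (simp add: order_def card_image)

lemma psi_prod:
  fixes A :: "('a, 'b) monoid_scheme"
  assumes "group A" "finite (carrier A)" "m > 0" "coprime (card (carrier A)) m"
    "subgroup H1 A" "subgroup H2 (Cyc m)"
  shows "psi ((A \<times>\<times> Cyc m)\<lparr>carrier := H1 \<times> H2\<rparr>) = psi (A\<lparr>carrier := H1\<rparr>) * psi ((Cyc m)\<lparr>carrier := H2\<rparr>)"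
proof -
  interpret A: group A by fact
  interpret C: group "Cyc m" by simp
  have PG: "group (A \<times>\<times> Cyc m)" using DirProd_group[OF assms(1) group_integer_mod_group] .
  have sub: "subgroup (H1 \<times> H2) (A \<times>\<times> Cyc m)"
    using DirProd_subgroups[OF assms(1) assms(5) group_integer_mod_group assms(6)] .
  have H1s: "H1 \<subseteq> carrier A" using assms(5) subgroup.subset by blast
  have H2s: "H2 \<subseteq> carrier (Cyc m)" using assms(6) subgroup.subset by blast
  have ordeq: "group.ord (A \<times>\<times> Cyc m) (a, c) = A.ord a * C.ord c" if "a \<in> H1" "c \<in> H2" for a c
  proof -
    have a: "a \<in> carrier A" and c: "c \<in> carrier (Cyc m)" using that H1s H2s by auto
    have "A.ord a dvd card (carrier A)" using A.ord_dvd_group_order[OF a] by (simp add: order_def)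
    moreover have "C.ord c dvd m" using C.ord_dvd_group_order[OF c] order_Cyc[OF assms(3)] by simp
    ultimately have "coprime (A.ord a) (C.ord c)" using assms(4) coprime_divisors by blast
    then show ?thesis using ord_pair[OF assms(1) group_integer_mod_group a c] by (simp add: lcm_coprime)
  qed
  have "psi ((A \<times>\<times> Cyc m)\<lparr>carrier := H1 \<times> H2\<rparr>) = (\<Sum>z\<in>H1 \<times> H2. group.ord (A \<times>\<times> Cyc m) z)"
    by (rule psi_sub[OF PG sub])
  also have "\<dots> = (\<Sum>(a,c)\<in>H1 \<times> H2. A.ord a * C.ord c)"
    using ordeq by (intro sum.cong) auto
  also have "\<dots> = (\<Sum>a\<in>H1. \<Sum>c\<in>H2. A.ord a * C.ord c)"
    by (simp add: sum.cartesian_product)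
  also have "\<dots> = (\<Sum>a\<in>H1. A.ord a) * (\<Sum>c\<in>H2. C.ord c)"
    by (simp add: sum_product)
  also have "\<dots> = psi (A\<lparr>carrier := H1\<rparr>) * psi ((Cyc m)\<lparr>carrier := H2\<rparr>)"
    using psi_sub[OF assms(1) assms(5)] psi_sub[OF C.is_group assms(6)] by simp
  finally show ?thesis .
qed

lemma psi_mono: assumes "group G" "finite (carrier G)" "subgroup H G" "subgroup K G" "H \<subseteq> K"
  shows "psi (G\<lparr>carrier := H\<rparr>) \<le> psi (G\<lparr>carrier := K\<rparr>)"
proof -
  have "finite K" using assms(2,4) subgroup.subset finite_subset by blast
  then show ?thesis using psi_sub[OF assms(1,3)] psi_sub[OF assms(1,4)] assms(5) by (simp add: sum_mono2)
qed

lemma psi_full: "psi (G\<lparr>carrier := carrier G\<rparr>) = psi G"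
  by simp

lemma exists_maximal: assumes "group G" "finite (carrier G)" "subgroup H G" "H \<noteq> carrier G"
  shows "\<exists>M. maximal_subgroup M G \<and> H \<subseteq> M"
proof -
  define S where "S = {K. subgroup K G \<and> H \<subseteq> K \<and> K \<noteq> carrier G}"
  have finS: "finite S" unfolding S_def
    by (rule finite_subset[of _ "Pow (carrier G)"]) (auto simp: assms(2) dest: subgroup.subset)
  have HS: "H \<in> S" using assms S_def by simp
  have ne: "card ` S \<noteq> {}" using HS by blast
  have "Max (card ` S) \<in> card ` S" using Max_in[OF finite_imageI[OF finS] ne] .
  then obtain M where M1: "M \<in> S" "card M = Max (card ` S)" by (metis imageE)
  have M2: "\<forall>K\<in>S. card K \<le> card M"
  proof
    fix K assume "K \<in> S"
    then have "card K \<in> card ` S" by blast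
    then show "card K \<le> card M" using M1(2) Max_ge[OF finite_imageI[OF finS]] by metis
  qed
  note M = M1(1) M2
  have "maximal_subgroup M G"
    unfolding maximal_subgroup_def
  proof (intro conjI allI impI)
    show "subgroup M G" "M \<noteq> carrier G" using M S_def by auto
    fix K assume K: "subgroup K G \<and> M \<subseteq> K"
    show "K = M \<or> K = carrier G"
    proof (rule ccontr)
      assume "\<not> (K = M \<or> K = carrier G)"
      then have "K \<in> S" using K M(1) S_def by auto
      then have "card K \<le> card M" using M by blast
      moreover have fK: "finite K" using K by (meson assms(2) finite_subset subgroup.subset)
      moreover have "card M \<le> card K" using K fK by (simp add: card_mono)
      ultimately have "M = K" using K card_subset_eq[OF fK] by simp
      then have "K = M" by simp
      then show False using \<open>\<not> (K = M \<or> K = carrier G)\<close> by blast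
    qed
  qed
  then show ?thesis using M S_def by auto
qed

lemma part_i:
  fixes A :: "('a, 'b) monoid_scheme" and B :: "'a set" and m :: nat
  assumes grp: "group A" and fin: "finite (carrier A)"
    and "odd m" and m0: "m > 0" and cop: "coprime (card (carrier A)) m"
    and maxB: "maximal_subgroup B A"
    and best: "\<forall>B'. maximal_subgroup B' A \<longrightarrow> psi (A\<lparr>carrier := B'\<rparr>) \<le> psi (A\<lparr>carrier := B\<rparr>)"
    and r7: "psi A \<le> 7 * psi (A\<lparr>carrier := B\<rparr>)"
  shows
      "maximal_subgroup (B \<times> carrier (Cyc m)) (A \<times>\<times> Cyc m) \<and>
      (\<forall>H. maximal_subgroup H (A \<times>\<times> Cyc m) \<longrightarrow>
          psi ((A \<times>\<times> Cyc m)\<lparr>carrier := H\<rparr>) \<le> psi ((A \<times>\<times> Cyc m)\<lparr>carrier := B \<times> carrier (Cyc m)\<rparr>)) \<and>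
      (\<forall>H. subgroup H (A \<times>\<times> Cyc m) \<and> H \<noteq> carrier (A \<times>\<times> Cyc m) \<longrightarrow>
          psi ((A \<times>\<times> Cyc m)\<lparr>carrier := H\<rparr>) \<le> psi ((A \<times>\<times> Cyc m)\<lparr>carrier := B \<times> carrier (Cyc m)\<rparr>))"
proof -
  interpret A: group A by fact
  interpret C: group "Cyc m" by simp
  have PG: "group (A \<times>\<times> Cyc m)" using DirProd_group[OF grp group_integer_mod_group] .
  have finC: "finite (carrier (Cyc m))" using carrier_Cyc[OF m0] by simp
  have subB: "subgroup B A" and BneA: "B \<noteq> carrier A" using maxB unfolding maximal_subgroup_def by auto
  have subC: "subgroup (carrier (Cyc m)) (Cyc m)" by (rule C.subgroup_self)
  have subA: "subgroup (carrier A) A" by (rule A.subgroup_self)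
  have psiBC: "psi ((A \<times>\<times> Cyc m)\<lparr>carrier := B \<times> carrier (Cyc m)\<rparr>) = psi (A\<lparr>carrier := B\<rparr>) * psi (Cyc m)"
    using psi_prod[OF grp fin m0 cop subB subC] by simp
  have Q: "\<forall>H. subgroup H (A \<times>\<times> Cyc m) \<and> H \<noteq> carrier (A \<times>\<times> Cyc m) \<longrightarrow>
          psi ((A \<times>\<times> Cyc m)\<lparr>carrier := H\<rparr>) \<le> psi ((A \<times>\<times> Cyc m)\<lparr>carrier := B \<times> carrier (Cyc m)\<rparr>)"
  proof (intro allI impI)
    fix H assume H: "subgroup H (A \<times>\<times> Cyc m) \<and> H \<noteq> carrier (A \<times>\<times> Cyc m)"
    define H1 where "H1 = fst ` H"
    define H2 where "H2 = snd ` H"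
    have HH: "H = H1 \<times> H2" using prod_decomp[OF grp fin m0 cop] H H1_def H2_def by blast
    have s1: "subgroup H1 A" using sub_fst[OF grp group_integer_mod_group] H H1_def by blast
    have s2: "subgroup H2 (Cyc m)" using sub_snd[OF grp group_integer_mod_group] H H2_def by blast
    have psiH: "psi ((A \<times>\<times> Cyc m)\<lparr>carrier := H\<rparr>) = psi (A\<lparr>carrier := H1\<rparr>) * psi ((Cyc m)\<lparr>carrier := H2\<rparr>)"
      using psi_prod[OF grp fin m0 cop s1 s2] HH by simp
    have c2: "psi ((Cyc m)\<lparr>carrier := H2\<rparr>) \<le> psi (Cyc m)"
      using psi_mono[OF C.is_group finC s2 subC] s2 subgroup.subset by fastforce
    show "psi ((A \<times>\<times> Cyc m)\<lparr>carrier := H\<rparr>) \<le> psi ((A \<times>\<times> Cyc m)\<lparr>carrier := B \<times> carrier (Cyc m)\<rparr>)"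
    proof (cases "H1 = carrier A")
      case False
      then obtain M where M: "maximal_subgroup M A" "H1 \<subseteq> M" using exists_maximal[OF grp fin s1] by blast
      have sM: "subgroup M A" using M(1) unfolding maximal_subgroup_def by blast
      have "psi (A\<lparr>carrier := H1\<rparr>) \<le> psi (A\<lparr>carrier := M\<rparr>)" using psi_mono[OF grp fin s1 sM M(2)] .
      also have "\<dots> \<le> psi (A\<lparr>carrier := B\<rparr>)" using best M(1) by blast
      finally have c1: "psi (A\<lparr>carrier := H1\<rparr>) \<le> psi (A\<lparr>carrier := B\<rparr>)" .
      show ?thesis unfolding psiH psiBC using c1 c2 by (rule mult_le_mono)
    next
      case True
      then have "H2 \<noteq> carrier (Cyc m)" using H HH by auto
      then have c3: "7 * psi ((Cyc m)\<lparr>carrier := H2\<rparr>) \<le> psi (Cyc m)"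
        using psi_Cyc_sub[OF m0 assms(3) s2] by blast
      have "psi (A\<lparr>carrier := H1\<rparr>) = psi A" using True by simp
      then have "psi (A\<lparr>carrier := H1\<rparr>) * psi ((Cyc m)\<lparr>carrier := H2\<rparr>)
           \<le> (7 * psi (A\<lparr>carrier := B\<rparr>)) * psi ((Cyc m)\<lparr>carrier := H2\<rparr>)" using r7 by simp
      also have "\<dots> = psi (A\<lparr>carrier := B\<rparr>) * (7 * psi ((Cyc m)\<lparr>carrier := H2\<rparr>))" by simp
      also have "\<dots> \<le> psi (A\<lparr>carrier := B\<rparr>) * psi (Cyc m)" using c3 by simp
      finally show ?thesis unfolding psiH psiBC .
    qed
  qed
  have MBC: "maximal_subgroup (B \<times> carrier (Cyc m)) (A \<times>\<times> Cyc m)"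
    unfolding maximal_subgroup_def
  proof (intro conjI allI impI)
    show "subgroup (B \<times> carrier (Cyc m)) (A \<times>\<times> Cyc m)"
      using DirProd_subgroups[OF grp subB group_integer_mod_group subC] .
    show "B \<times> carrier (Cyc m) \<noteq> carrier (A \<times>\<times> Cyc m)"
    proof
      assume eq: "B \<times> carrier (Cyc m) = carrier (A \<times>\<times> Cyc m)"
      have "(0::int) \<in> carrier (Cyc m)" by simp
      then have "B = carrier A" using eq by (auto simp: times_eq_iff)
      then show False using BneA by simp
    qed
    fix K assume K: "subgroup K (A \<times>\<times> Cyc m) \<and> B \<times> carrier (Cyc m) \<subseteq> K"
    have KK: "K = fst ` K \<times> snd ` K" using prod_decomp[OF grp fin m0 cop] K by blast
    have sK: "subgroup (fst ` K) A" using sub_fst[OF grp group_integer_mod_group] K by blast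
    have "B \<subseteq> fst ` K"
    proof
      fix b assume "b \<in> B"
      then have "(b, 0) \<in> K" using K by auto
      then show "b \<in> fst ` K" by (metis fst_conv imageI)
    qed
    then have K1: "fst ` K = B \<or> fst ` K = carrier A" using maxB sK unfolding maximal_subgroup_def by blast
    have K2: "snd ` K = carrier (Cyc m)"
    proof
      show "snd ` K \<subseteq> carrier (Cyc m)" using K subgroup.subset by fastforce
      show "carrier (Cyc m) \<subseteq> snd ` K"
      proof
        fix c assume "c \<in> carrier (Cyc m)"
        then have "(\<one>\<^bsub>A\<^esub>, c) \<in> K" using K subgroup.one_closed[OF subB] by auto
        then show "c \<in> snd ` K" by (metis snd_conv imageI)
      qed
    qed
    show "K = B \<times> carrier (Cyc m) \<or> K = carrier (A \<times>\<times> Cyc m)"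
      using K1 K2 KK by auto
  qed
  show ?thesis using MBC Q unfolding maximal_subgroup_def by blast
qed

lemma cyclic_gen:
  assumes grp: "group A" and fin: "finite (carrier A)" and sub: "subgroup B A"
    and cyc: "cyclic_group (A\<lparr>carrier := B\<rparr>)"
  shows "\<exists>g\<in>B. group.ord A g = card B \<and> B = (\<lambda>j. g [^]\<^bsub>A\<^esub> j) ` {..<card B}"
proof -
  interpret A: group A by fact
  interpret BG: group "A\<lparr>carrier := B\<rparr>" using sub subgroup.subgroup_is_group grp by blast
  obtain x where x: "x \<in> B" "B = range (\<lambda>i::int. x [^]\<^bsub>A\<lparr>carrier := B\<rparr>\<^esub> i)"
    using BG.cyclic_group cyc by auto
  have xA: "x \<in> carrier A" using x(1) sub subgroup.subset by blast
  have B': "B = range (\<lambda>i::int. x [^]\<^bsub>A\<^esub> i)"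
    using x A.int_pow_consistent[OF sub x(1)] by simp
  define od where "od = A.ord x"
  have o1: "od \<ge> 1" using A.ord_ge_1[OF fin xA] od_def by simp
  have img: "B = (\<lambda>j. x [^]\<^bsub>A\<^esub> j) ` {..<od}"
  proof
    show "B \<subseteq> (\<lambda>j. x [^]\<^bsub>A\<^esub> j) ` {..<od}"
    proof
      fix u assume "u \<in> B"
      then obtain i :: int where i: "u = x [^]\<^bsub>A\<^esub> i" using B' by blast
      define j where "j = nat (i mod int od)"
      have j0: "int j = i mod int od" using o1 j_def by simp
      have "x [^]\<^bsub>A\<^esub> i = x [^]\<^bsub>A\<^esub> (int j)"
        unfolding A.int_pow_eq[OF xA] j0 od_def[symmetric] by (simp add: mod_eq_dvd_iff[symmetric] mod_diff_right_eq[symmetric])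
      then have "u = x [^]\<^bsub>A\<^esub> j" using i by (simp add: int_pow_int)
      moreover have "j < od" using o1 j_def by (simp add: nat_less_iff)
      ultimately show "u \<in> (\<lambda>j. x [^]\<^bsub>A\<^esub> j) ` {..<od}" by blast
    qed
    show "(\<lambda>j. x [^]\<^bsub>A\<^esub> j) ` {..<od} \<subseteq> B"
      using sub_pow_closed[OF grp sub x(1)] by blast
  qed
  have inj: "inj_on (\<lambda>j. x [^]\<^bsub>A\<^esub> j) {..<od}"
  proof -
    have "{..<od} = {0..od - 1}" using o1 by auto
    then show ?thesis using A.ord_inj[OF xA] od_def by simp
  qed
  have c: "card B = A.ord x" using img inj od_def by (simp add: card_image)
  have i2: "B = (\<lambda>j. x [^]\<^bsub>A\<^esub> j) ` {..<card B}" by (subst c) (simp add: img[unfolded od_def])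
  show ?thesis
  proof (rule bexI[of _ x])
    show "A.ord x = card B \<and> B = (\<lambda>j. x [^]\<^bsub>A\<^esub> j) ` {..<card B}" by (rule conjI[OF c[symmetric] i2])
  qed (rule x(1))
qed

lemma g_bound: fixes e k :: nat assumes "e > 0"
  shows "e * (\<Sum>y<k. k div gcd k y) \<le> (\<Sum>x<e*k. (e*k) div gcd (e*k) x)"
proof -
  define F where "F = (\<lambda>x. (e*k) div gcd (e*k) x)"
  have "(\<Sum>x<e*k. F x) = (\<Sum>t<e. sum F {t*k..<t*k+k})"
    using sum.nat_group[of F k e] by (simp add: mult.commute)
  also have "\<dots> = (\<Sum>t<e. \<Sum>y<k. F (y + k*t))"
  proof -
    have "sum F {t*k..<t*k+k} = (\<Sum>y<k. F (y + k*t))" for t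
    proof -
      have "sum F {0 + t*k..<k + t*k} = (\<Sum>i\<in>{0..<k}. F (i + t*k))"
        by (rule sum.shift_bounds_nat_ivl)
      then show ?thesis
        by (simp add: add.commute mult.commute atLeast0LessThan)
    qed
    then show ?thesis by simp
  qed
  also have "\<dots> = (\<Sum>y<k. \<Sum>t<e. F (y + k*t))" by (rule sum.swap)
  finally have eq: "(\<Sum>x<e*k. F x) = (\<Sum>y<k. \<Sum>t<e. F (y + k*t))" .
  have tb: "k div gcd k y \<le> F (y + k*t)" if "y < k" for y t
  proof -
    have gg: "gcd k (y + k*t) = gcd k y" using gcd_add_mult[of k t y] by (simp add: add.commute mult.commute)
    define a where "a = y + k*t"
    have k0: "k > 0" using that by simp
    have "gcd (e*k) a dvd gcd (e*k) (e*a)" by simp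
    also have "gcd (e*k) (e*a) = e * gcd k a" by (simp add: gcd_mult_distrib_nat)
    finally have d: "gcd (e*k) a dvd e * gcd k a" .
    have p1: "gcd (e*k) a > 0" using k0 assms by simp
    have le: "gcd (e*k) a \<le> e * gcd k a" using d k0 assms by (simp add: dvd_imp_le)
    have "(e*k) div (e * gcd k a) \<le> (e*k) div gcd (e*k) a" by (rule div_le_mono2[OF p1 le])
    moreover have "(e*k) div (e * gcd k a) = k div gcd k a" using assms by simp
    ultimately show ?thesis using gg a_def F_def by simp
  qed
  have "e * (\<Sum>y<k. k div gcd k y) = (\<Sum>y<k. \<Sum>t<e. k div gcd k y)" by (simp add: sum_distrib_left mult.commute)
  also have "\<dots> \<le> (\<Sum>y<k. \<Sum>t<e. F (y + k*t))"
    using tb by (intro sum_mono) auto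
  finally show ?thesis using eq by (simp add: F_def)
qed

lemma ord_gpow: assumes "group A" "g \<in> carrier A" "group.ord A g = n" "n > 0"
  shows "group.ord A (g [^]\<^bsub>A\<^esub> (j::nat)) = n div gcd n j"
  using group.ord_pow_gen[OF assms(1,2), of j] assms(3,4) by simp

lemma cyc_psiB: assumes "group A" "g \<in> carrier A" "group.ord A g = n" "n > 0"
    "B = (\<lambda>j. g [^]\<^bsub>A\<^esub> j) ` {..<n}"
  shows "(\<Sum>u\<in>B. group.ord A u) = (\<Sum>j<n. n div gcd n j)"
proof -
  have inj: "inj_on (\<lambda>j. g [^]\<^bsub>A\<^esub> j) {..<n}"
  proof -
    have "{..<n} = {0..n - 1}" using assms(4) by auto
    then show ?thesis using group.ord_inj[OF assms(1,2)] assms(3) by simp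
  qed
  show ?thesis unfolding assms(5) using inj ord_gpow[OF assms(1-4)] by (simp add: sum.reindex)
qed

lemma cyc_sq: assumes "group A" "g \<in> carrier A" "group.ord A g = n" "n > 0"
    "B = (\<lambda>j. g [^]\<^bsub>A\<^esub> j) ` {..<n}"
  shows "card {t\<in>B. t \<otimes>\<^bsub>A\<^esub> t = \<one>\<^bsub>A\<^esub>} \<le> 2"
proof -
  interpret A: group A by fact
  have "{t\<in>B. t \<otimes>\<^bsub>A\<^esub> t = \<one>\<^bsub>A\<^esub>} \<subseteq> {g [^]\<^bsub>A\<^esub> (0::nat), g [^]\<^bsub>A\<^esub> (n div 2)}"
  proof
    fix t assume t: "t \<in> {t\<in>B. t \<otimes>\<^bsub>A\<^esub> t = \<one>\<^bsub>A\<^esub>}"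
    then obtain j where j: "j < n" "t = g [^]\<^bsub>A\<^esub> j" using assms(5) by auto
    have "g [^]\<^bsub>A\<^esub> (j + j) = \<one>\<^bsub>A\<^esub>" using t j assms(2) by (simp add: A.nat_pow_mult[symmetric])
    then have "n dvd j + j" using A.pow_eq_id[OF assms(2)] assms(3) by simp
    then obtain q where q: "j + j = n * q" by blast
    have "q < 2" using q j(1) by (metis add_less_mono mult_2 mult_less_cancel1 not_less_eq mult.commute)
    then have "j = 0 \<or> j = n div 2" using q by (cases q) auto
    then show "t \<in> {g [^]\<^bsub>A\<^esub> (0::nat), g [^]\<^bsub>A\<^esub> (n div 2)}" using j by auto
  qed
  then have "card {t\<in>B. t \<otimes>\<^bsub>A\<^esub> t = \<one>\<^bsub>A\<^esub>} \<le> card {g [^]\<^bsub>A\<^esub> (0::nat), g [^]\<^bsub>A\<^esub> (n div 2)}"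
    by (rule card_mono[rotated]) simp
  also have "\<dots> \<le> 2" by (simp add: card_insert_le_m1)
  finally show ?thesis .
qed

lemma cyc_sub: assumes grp: "group A" "g \<in> carrier A" "group.ord A g = n" "n > 0"
    and Bd: "B = (\<lambda>j. g [^]\<^bsub>A\<^esub> j) ` {..<n}"
    and sB: "subgroup B A" and sK: "subgroup K A" and KB: "K \<subseteq> B"
  shows "n * (\<Sum>v\<in>K. group.ord A v) \<le> card K * (\<Sum>u\<in>B. group.ord A u)"
proof -
  interpret A: group A by fact
  interpret BG: group "A\<lparr>carrier := B\<rparr>" using sB subgroup.subgroup_is_group grp by blast
  interpret KG: group "A\<lparr>carrier := K\<rparr>" using sK subgroup.subgroup_is_group grp by blast
  have cB: "card B = n"
  proof -
    have "{..<n} = {0..n - 1}" using assms(4) by auto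
    then have "inj_on (\<lambda>j. g [^]\<^bsub>A\<^esub> j) {..<n}" using A.ord_inj[OF assms(2)] assms(3) by simp
    then show ?thesis using Bd by (simp add: card_image)
  qed
  have finB: "finite B" using Bd by simp
  have finK: "finite K" using finB KB finite_subset by blast
  define k where "k = card K"
  have k0: "k > 0" using finK sK subgroup.one_closed k_def card_gt_0_iff by blast
  have "subgroup K (A\<lparr>carrier := B\<rparr>)" using A.subgroup_incl[OF sK sB KB] .
  then have "card (rcosets\<^bsub>A\<lparr>carrier := B\<rparr>\<^esub> K) * k = n" using BG.lagrange cB k_def by (simp add: order_def)
  then obtain e where ne: "n = e * k" by (metis)
  have e0: "e > 0" using ne assms(4) by (metis gr0I mult_0)
  have Ksub: "K \<subseteq> (\<lambda>i. g [^]\<^bsub>A\<^esub> (e*i)) ` {..<k}"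
  proof
    fix v assume v: "v \<in> K"
    have "group.ord A v dvd k"
      using KG.ord_dvd_group_order[of v] v ord_sub[OF grp(1) sK] k_def by (simp add: order_def)
    obtain j where j: "j < n" "v = g [^]\<^bsub>A\<^esub> j" using v KB Bd by auto
    have vA: "v \<in> carrier A" using v sK subgroup.subset by blast
    have "v [^]\<^bsub>A\<^esub> k = \<one>\<^bsub>A\<^esub>" using A.pow_eq_id[OF vA] \<open>group.ord A v dvd k\<close> by simp
    then have "g [^]\<^bsub>A\<^esub> (j*k) = \<one>\<^bsub>A\<^esub>" using j assms(2) by (simp add: A.nat_pow_pow)
    then have "n dvd j*k" using A.pow_eq_id[OF assms(2)] assms(3) by simp
    then have "e dvd j" using ne k0 by simp
    then obtain i where i: "j = e*i" by blast
    have "i < k" using i j(1) ne e0 by simp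
    then show "v \<in> (\<lambda>i. g [^]\<^bsub>A\<^esub> (e*i)) ` {..<k}" using i j by blast
  qed
  have "(\<Sum>v\<in>K. group.ord A v) \<le> (\<Sum>v\<in>(\<lambda>i. g [^]\<^bsub>A\<^esub> (e*i)) ` {..<k}. group.ord A v)"
    using Ksub by (intro sum_mono2) auto
  also have "\<dots> \<le> (\<Sum>i<k. group.ord A (g [^]\<^bsub>A\<^esub> (e*i)))"
    using sum_image_le[of "{..<k}" "group.ord A" "\<lambda>i. g [^]\<^bsub>A\<^esub> (e*i)"] by (simp add: o_def)
  also have "\<dots> = (\<Sum>i<k. k div gcd k i)"
  proof (intro sum.cong refl)
    fix i
    have "group.ord A (g [^]\<^bsub>A\<^esub> (e*i)) = n div gcd n (e*i)" by (rule ord_gpow[OF assms(1-4)])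
    also have "\<dots> = (e*k) div (e * gcd k i)" using ne by (simp add: gcd_mult_distrib_nat)
    also have "\<dots> = k div gcd k i" using e0 by simp
    finally show "group.ord A (g [^]\<^bsub>A\<^esub> (e*i)) = k div gcd k i" .
  qed
  finally have sK': "(\<Sum>v\<in>K. group.ord A v) \<le> (\<Sum>i<k. k div gcd k i)" .
  have sB': "(\<Sum>u\<in>B. group.ord A u) = (\<Sum>x<e*k. (e*k) div gcd (e*k) x)"
    using cyc_psiB[OF assms(1-4) Bd] ne by simp
  have "n * (\<Sum>v\<in>K. group.ord A v) = k * (e * (\<Sum>v\<in>K. group.ord A v))" using ne by simp
  also have "\<dots> \<le> k * (e * (\<Sum>i<k. k div gcd k i))" using sK' by simp
  also have "\<dots> \<le> k * (\<Sum>u\<in>B. group.ord A u)" using g_bound[OF e0, of k] sB' by simp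
  finally show ?thesis using k_def by simp
qed

lemma hom_fiber_sum:
  assumes "group G" "group H" "finite (carrier G)" "f \<in> hom G H"
  shows "(\<Sum>x\<in>carrier G. F (f x)) = card (kernel G H f) * (\<Sum>z\<in>f ` carrier G. F z)"
proof -
  interpret h: group_hom G H f by (intro group_hom.intro group_hom_axioms.intro assms)
  have fib: "card {x \<in> carrier G. f x = z} = card (kernel G H f)" if zin: "z \<in> f ` carrier G" for z
  proof -
    obtain x0 where x0': "z = f x0" "x0 \<in> carrier G" using zin by (rule imageE)
    have x0: "x0 \<in> carrier G" "f x0 = z" using x0' by simp_all
    have eq: "{x \<in> carrier G. f x = z} = (\<lambda>t. x0 \<otimes>\<^bsub>G\<^esub> t) ` kernel G H f"
    proof
      show "{x \<in> carrier G. f x = z} \<subseteq> (\<lambda>t. x0 \<otimes>\<^bsub>G\<^esub> t) ` kernel G H f"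
      proof
        fix x assume x: "x \<in> {x \<in> carrier G. f x = z}"
        then have xc: "x \<in> carrier G" by simp
        have "f (inv\<^bsub>G\<^esub> x0 \<otimes>\<^bsub>G\<^esub> x) = inv\<^bsub>H\<^esub> z \<otimes>\<^bsub>H\<^esub> z"
          using x x0 by (simp add: h.hom_mult h.hom_inv)
        also have "\<dots> = \<one>\<^bsub>H\<^esub>" using h.hom_closed[OF x0(1)] x0(2) by simp
        finally have "inv\<^bsub>G\<^esub> x0 \<otimes>\<^bsub>G\<^esub> x \<in> kernel G H f" using xc x0 by (simp add: kernel_def)
        moreover have "x = x0 \<otimes>\<^bsub>G\<^esub> (inv\<^bsub>G\<^esub> x0 \<otimes>\<^bsub>G\<^esub> x)"
          using xc x0 by (simp add: h.G.m_assoc[symmetric])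
        ultimately show "x \<in> (\<lambda>t. x0 \<otimes>\<^bsub>G\<^esub> t) ` kernel G H f" by (rule rev_image_eqI)
      qed
      show "(\<lambda>t. x0 \<otimes>\<^bsub>G\<^esub> t) ` kernel G H f \<subseteq> {x \<in> carrier G. f x = z}"
      proof
        fix x assume "x \<in> (\<lambda>t. x0 \<otimes>\<^bsub>G\<^esub> t) ` kernel G H f"
        then obtain t where t: "t \<in> carrier G" "f t = \<one>\<^bsub>H\<^esub>" "x = x0 \<otimes>\<^bsub>G\<^esub> t" by (auto simp: kernel_def)
        have "f x = f x0 \<otimes>\<^bsub>H\<^esub> f t" using t x0 by (simp add: h.hom_mult)
        then show "x \<in> {x \<in> carrier G. f x = z}" using t x0 h.hom_closed[OF x0(1)] by simp
      qed
    qed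
    have "inj_on (\<lambda>t. x0 \<otimes>\<^bsub>G\<^esub> t) (kernel G H f)"
    proof (rule inj_onI)
      fix a b assume "a \<in> kernel G H f" "b \<in> kernel G H f" "x0 \<otimes>\<^bsub>G\<^esub> a = x0 \<otimes>\<^bsub>G\<^esub> b"
      then show "a = b" using x0 h.G.l_cancel by (simp add: kernel_def)
    qed
    then show ?thesis using eq by (simp add: card_image)
  qed
  have "(\<Sum>x\<in>carrier G. F (f x)) = (\<Sum>z\<in>f ` carrier G. \<Sum>x\<in>{x \<in> carrier G. f x = z}. F (f x))"
    using sum.image_gen[OF assms(3), of "\<lambda>x. F (f x)" f] .
  also have "\<dots> = (\<Sum>z\<in>f ` carrier G. card (kernel G H f) * F z)"
  proof (intro sum.cong refl)
    fix z assume z: "z \<in> f ` carrier G"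
    have "(\<Sum>x\<in>{x \<in> carrier G. f x = z}. F (f x)) = (\<Sum>x\<in>{x \<in> carrier G. f x = z}. F z)"
      by (intro sum.cong) auto
    also have "\<dots> = card (kernel G H f) * F z" using fib[OF z] by simp
    finally show "(\<Sum>x\<in>{x \<in> carrier G. f x = z}. F (f x)) = card (kernel G H f) * F z" .
  qed
  also have "\<dots> = card (kernel G H f) * (\<Sum>z\<in>f ` carrier G. F z)" by (simp add: sum_distrib_left)
  finally show ?thesis .
qed

lemma ord_sq: assumes "group A" "finite (carrier A)" "x \<in> carrier A"
  shows "group.ord A x \<le> 2 * group.ord A (x \<otimes>\<^bsub>A\<^esub> x)"
proof -
  interpret A: group A by fact
  have "x \<otimes>\<^bsub>A\<^esub> x = x [^]\<^bsub>A\<^esub> (2::nat)" using assms(3) by (simp add: numeral_2_eq_2)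
  then have e: "A.ord (x \<otimes>\<^bsub>A\<^esub> x) = A.ord x div gcd (A.ord x) 2" using A.ord_pow_gen[OF assms(3), of 2] by simp
  have "gcd (A.ord x) 2 \<le> 2" by (simp add: gcd_le2_nat)
  have "A.ord x = (A.ord x div gcd (A.ord x) 2) * gcd (A.ord x) 2" by simp
  also have "\<dots> \<le> (A.ord x div gcd (A.ord x) 2) * 2" using \<open>gcd (A.ord x) 2 \<le> 2\<close> by (rule mult_le_mono2)
  finally show ?thesis using e by simp
qed

lemma comm_sub: assumes "subgroup K A" "group A" "\<And>a b. a \<in> K \<Longrightarrow> b \<in> K \<Longrightarrow> a \<otimes>\<^bsub>A\<^esub> b = b \<otimes>\<^bsub>A\<^esub> a"
  and "f = (\<lambda>k. k \<otimes>\<^bsub>A\<^esub> k)"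
  shows "f \<in> hom (A\<lparr>carrier := K\<rparr>) (A\<lparr>carrier := K\<rparr>)"
proof -
  interpret A: group A by fact
  have Ks: "K \<subseteq> carrier A" using assms(1) subgroup.subset by blast
  show ?thesis
  proof (rule homI)
    fix x assume "x \<in> carrier (A\<lparr>carrier := K\<rparr>)"
    then show "f x \<in> carrier (A\<lparr>carrier := K\<rparr>)" using assms(1,4) subgroup.m_closed by fastforce
  next
    fix x y assume xy: "x \<in> carrier (A\<lparr>carrier := K\<rparr>)" "y \<in> carrier (A\<lparr>carrier := K\<rparr>)"
    then have x: "x \<in> K" "x \<in> carrier A" and y: "y \<in> K" "y \<in> carrier A" using Ks by auto
    have "(x \<otimes>\<^bsub>A\<^esub> y) \<otimes>\<^bsub>A\<^esub> (x \<otimes>\<^bsub>A\<^esub> y) = x \<otimes>\<^bsub>A\<^esub> ((y \<otimes>\<^bsub>A\<^esub> x) \<otimes>\<^bsub>A\<^esub> y)"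
      using x y by (simp add: A.m_assoc)
    also have "\<dots> = x \<otimes>\<^bsub>A\<^esub> ((x \<otimes>\<^bsub>A\<^esub> y) \<otimes>\<^bsub>A\<^esub> y)" using assms(3)[OF x(1) y(1)] by simp
    also have "\<dots> = (x \<otimes>\<^bsub>A\<^esub> x) \<otimes>\<^bsub>A\<^esub> (y \<otimes>\<^bsub>A\<^esub> y)" using x y by (simp add: A.m_assoc)
    finally show "f (x \<otimes>\<^bsub>A\<lparr>carrier := K\<rparr>\<^esub> y) = f x \<otimes>\<^bsub>A\<lparr>carrier := K\<rparr>\<^esub> f y" using assms(4) by simp
  qed
qed

lemma part_ii:
  fixes A :: "('a, 'b) monoid_scheme" and B :: "'a set"
  assumes grp: "group A" and fin: "finite (carrier A)" and sB: "subgroup B A"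
    and cyc: "cyclic_group (A\<lparr>carrier := B\<rparr>)" and idx: "card (carrier A) = 2 * card B"
  shows "psi A \<le> 5 * psi (A\<lparr>carrier := B\<rparr>)"
proof -
  interpret A: group A by fact
  interpret BG: group "A\<lparr>carrier := B\<rparr>" using sB subgroup.subgroup_is_group grp by blast
  define n where "n = card B"
  have Bs: "B \<subseteq> carrier A" using sB subgroup.subset by blast
  have finB: "finite B" using fin Bs finite_subset by blast
  have oneB: "\<one>\<^bsub>A\<^esub> \<in> B" using sB subgroup.one_closed by blast
  have n0: "n > 0" using finB oneB n_def card_gt_0_iff by blast
  obtain g where g: "g \<in> B" "A.ord g = n" "B = (\<lambda>j. g [^]\<^bsub>A\<^esub> j) ` {..<n}"
    using cyclic_gen[OF grp fin sB cyc] n_def by blast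
  have gA: "g \<in> carrier A" using g(1) Bs by blast
  have comm: "b \<otimes>\<^bsub>A\<^esub> c = c \<otimes>\<^bsub>A\<^esub> b" if bc: "b \<in> B" "c \<in> B" for b c
  proof -
    obtain i j where "b = g [^]\<^bsub>A\<^esub> (i::nat)" "c = g [^]\<^bsub>A\<^esub> (j::nat)" using bc g(3) by blast
    then show ?thesis using gA by (simp add: A.nat_pow_mult add.commute)
  qed
  have BinA: "\<And>b. b \<in> B \<Longrightarrow> b \<in> carrier A" using Bs by blast
  have mB: "\<And>b c. b \<in> B \<Longrightarrow> c \<in> B \<Longrightarrow> b \<otimes>\<^bsub>A\<^esub> c \<in> B" by (rule subgroup.m_closed[OF sB])
  have iB: "\<And>b. b \<in> B \<Longrightarrow> inv\<^bsub>A\<^esub> b \<in> B" by (rule subgroup.m_inv_closed[OF sB])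
  have "card B < card (carrier A)" using idx n0 n_def by simp
  then have "\<not> carrier A \<subseteq> B" using card_mono[OF finB] by (meson not_le)
  then obtain y where y: "y \<in> carrier A" "y \<notin> B" by blast
  have yc1: "\<And>zz. zz \<in> carrier A \<Longrightarrow> y \<otimes>\<^bsub>A\<^esub> (inv\<^bsub>A\<^esub> y \<otimes>\<^bsub>A\<^esub> zz) = zz"
    using y(1) by (simp add: A.m_assoc[symmetric])
  have yc2: "\<And>zz. zz \<in> carrier A \<Longrightarrow> inv\<^bsub>A\<^esub> y \<otimes>\<^bsub>A\<^esub> (y \<otimes>\<^bsub>A\<^esub> zz) = zz"
    using y(1) by (simp add: A.m_assoc[symmetric])
  define yB where "yB = (\<lambda>c. y \<otimes>\<^bsub>A\<^esub> c) ` B"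
  have yBs: "yB \<subseteq> carrier A" using y Bs unfolding yB_def by auto
  have disj: "B \<inter> yB = {}"
  proof (rule ccontr)
    assume "B \<inter> yB \<noteq> {}"
    then obtain c where c: "c \<in> B" "y \<otimes>\<^bsub>A\<^esub> c \<in> B" unfolding yB_def by blast
    have "y = (y \<otimes>\<^bsub>A\<^esub> c) \<otimes>\<^bsub>A\<^esub> inv\<^bsub>A\<^esub> c" using c y BinA by (simp add: A.m_assoc)
    then have "y \<in> B" using c mB iB by metis
    then show False using y by blast
  qed
  have injy: "inj_on (\<lambda>c. y \<otimes>\<^bsub>A\<^esub> c) B"
    by (rule inj_onI) (use y BinA A.l_cancel in blast)
  have cyB: "card yB = n" unfolding yB_def n_def using injy by (simp add: card_image)
  have part: "carrier A = B \<union> yB"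
  proof -
    have "card (B \<union> yB) = card (carrier A)"
      using card_Un_disjoint[OF finB _ disj] yBs fin finite_subset cyB idx n_def by (metis mult_2)
    then show ?thesis using card_subset_eq[OF fin] Bs yBs by (metis Un_subset_iff)
  qed
  have normal: "inv\<^bsub>A\<^esub> y \<otimes>\<^bsub>A\<^esub> c \<otimes>\<^bsub>A\<^esub> y \<in> B" if c: "c \<in> B" for c
  proof -
    have cyA: "c \<otimes>\<^bsub>A\<^esub> y \<in> carrier A" using c y BinA by simp
    have "c \<otimes>\<^bsub>A\<^esub> y \<notin> B"
    proof
      assume "c \<otimes>\<^bsub>A\<^esub> y \<in> B"
      then have "inv\<^bsub>A\<^esub> c \<otimes>\<^bsub>A\<^esub> (c \<otimes>\<^bsub>A\<^esub> y) \<in> B" using c mB iB by blast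
      then have "y \<in> B" using c y BinA by (simp add: A.m_assoc[symmetric])
      then show False using y by blast
    qed
    then have "c \<otimes>\<^bsub>A\<^esub> y \<in> yB" using part cyA by blast
    then obtain b where b: "b \<in> B" "c \<otimes>\<^bsub>A\<^esub> y = y \<otimes>\<^bsub>A\<^esub> b" unfolding yB_def by blast
    have "inv\<^bsub>A\<^esub> y \<otimes>\<^bsub>A\<^esub> c \<otimes>\<^bsub>A\<^esub> y = inv\<^bsub>A\<^esub> y \<otimes>\<^bsub>A\<^esub> (c \<otimes>\<^bsub>A\<^esub> y)"
      using c y BinA by (simp add: A.m_assoc)
    also have "\<dots> = b" using b y BinA by (simp add: A.m_assoc[symmetric])
    finally show ?thesis using b by simp
  qed
  have ysq: "y \<otimes>\<^bsub>A\<^esub> y \<in> B"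
  proof (rule ccontr)
    assume "y \<otimes>\<^bsub>A\<^esub> y \<notin> B"
    then have "y \<otimes>\<^bsub>A\<^esub> y \<in> yB" using part y by blast
    then obtain b where b: "b \<in> B" "y \<otimes>\<^bsub>A\<^esub> y = y \<otimes>\<^bsub>A\<^esub> b" unfolding yB_def by blast
    then have "y = b" using y BinA A.l_cancel by blast
    then show False using y b by blast
  qed
  define \<alpha> where "\<alpha> = (\<lambda>c. inv\<^bsub>A\<^esub> y \<otimes>\<^bsub>A\<^esub> c \<otimes>\<^bsub>A\<^esub> y)"
  define \<phi> where "\<phi> = (\<lambda>c. \<alpha> c \<otimes>\<^bsub>A\<^esub> c)"
  have aB: "\<And>c. c \<in> B \<Longrightarrow> \<alpha> c \<in> B" using normal \<alpha>_def by simp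
  have pB: "\<And>c. c \<in> B \<Longrightarrow> \<phi> c \<in> B" using aB mB \<phi>_def by simp
  have amult: "\<alpha> (c \<otimes>\<^bsub>A\<^esub> d) = \<alpha> c \<otimes>\<^bsub>A\<^esub> \<alpha> d" if "c \<in> B" "d \<in> B" for c d
    using that y BinA unfolding \<alpha>_def by (simp add: A.m_assoc yc1)
  have phom: "\<phi> \<in> hom (A\<lparr>carrier := B\<rparr>) (A\<lparr>carrier := B\<rparr>)"
  proof (rule homI)
    fix c assume "c \<in> carrier (A\<lparr>carrier := B\<rparr>)" then show "\<phi> c \<in> carrier (A\<lparr>carrier := B\<rparr>)" using pB by simp
  next
    fix c d assume "c \<in> carrier (A\<lparr>carrier := B\<rparr>)" "d \<in> carrier (A\<lparr>carrier := B\<rparr>)"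
    then have c: "c \<in> B" and d: "d \<in> B" by auto
    have "\<phi> (c \<otimes>\<^bsub>A\<^esub> d) = (\<alpha> c \<otimes>\<^bsub>A\<^esub> \<alpha> d) \<otimes>\<^bsub>A\<^esub> (c \<otimes>\<^bsub>A\<^esub> d)" using amult[OF c d] \<phi>_def by simp
    also have "\<dots> = \<alpha> c \<otimes>\<^bsub>A\<^esub> (\<alpha> d \<otimes>\<^bsub>A\<^esub> c) \<otimes>\<^bsub>A\<^esub> d" using c d aB BinA by (simp add: A.m_assoc)
    also have "\<dots> = \<alpha> c \<otimes>\<^bsub>A\<^esub> (c \<otimes>\<^bsub>A\<^esub> \<alpha> d) \<otimes>\<^bsub>A\<^esub> d" using comm[OF aB[OF d] c] by simp
    also have "\<dots> = \<phi> c \<otimes>\<^bsub>A\<^esub> \<phi> d" using c d aB BinA by (simp add: A.m_assoc \<phi>_def)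
    finally show "\<phi> (c \<otimes>\<^bsub>A\<lparr>carrier := B\<rparr>\<^esub> d) = \<phi> c \<otimes>\<^bsub>A\<lparr>carrier := B\<rparr>\<^esub> \<phi> d" by simp
  qed
  have sqid: "(y \<otimes>\<^bsub>A\<^esub> c) \<otimes>\<^bsub>A\<^esub> (y \<otimes>\<^bsub>A\<^esub> c) = (y \<otimes>\<^bsub>A\<^esub> y) \<otimes>\<^bsub>A\<^esub> \<phi> c" if c: "c \<in> B" for c
  proof -
    have cA: "c \<in> carrier A" using c BinA by blast
    show ?thesis using cA y by (simp add: \<phi>_def \<alpha>_def A.m_assoc yc1)
  qed
  define K where "K = {c \<in> B. c \<otimes>\<^bsub>A\<^esub> y = y \<otimes>\<^bsub>A\<^esub> c}"
  have KB: "K \<subseteq> B" unfolding K_def by blast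
  have sK: "subgroup K A"
  proof (rule A.subgroupI)
    show "K \<subseteq> carrier A" using KB Bs by blast
    show "K \<noteq> {}" using oneB y unfolding K_def by auto
  next
    fix a assume a: "a \<in> K"
    then have aB': "a \<in> B" and aA: "a \<in> carrier A" and ay: "a \<otimes>\<^bsub>A\<^esub> y = y \<otimes>\<^bsub>A\<^esub> a" using BinA unfolding K_def by auto
    have "inv\<^bsub>A\<^esub> a \<otimes>\<^bsub>A\<^esub> y = inv\<^bsub>A\<^esub> a \<otimes>\<^bsub>A\<^esub> (y \<otimes>\<^bsub>A\<^esub> a) \<otimes>\<^bsub>A\<^esub> inv\<^bsub>A\<^esub> a"
      using aA y by (simp add: A.m_assoc)
    also have "\<dots> = inv\<^bsub>A\<^esub> a \<otimes>\<^bsub>A\<^esub> (a \<otimes>\<^bsub>A\<^esub> y) \<otimes>\<^bsub>A\<^esub> inv\<^bsub>A\<^esub> a" using ay by simp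
    also have "\<dots> = y \<otimes>\<^bsub>A\<^esub> inv\<^bsub>A\<^esub> a" using aA y by (simp add: A.m_assoc[symmetric])
    finally show "inv\<^bsub>A\<^esub> a \<in> K" using iB[OF aB'] unfolding K_def by simp
  next
    fix a b assume "a \<in> K" "b \<in> K"
    then have a: "a \<in> B" "a \<in> carrier A" "a \<otimes>\<^bsub>A\<^esub> y = y \<otimes>\<^bsub>A\<^esub> a" and b: "b \<in> B" "b \<in> carrier A" "b \<otimes>\<^bsub>A\<^esub> y = y \<otimes>\<^bsub>A\<^esub> b"
      using BinA unfolding K_def by auto
    have e1: "a \<otimes>\<^bsub>A\<^esub> b \<otimes>\<^bsub>A\<^esub> y = a \<otimes>\<^bsub>A\<^esub> (y \<otimes>\<^bsub>A\<^esub> b)" using a b y b(3) by (simp add: A.m_assoc)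
    have e2: "a \<otimes>\<^bsub>A\<^esub> (y \<otimes>\<^bsub>A\<^esub> b) = (y \<otimes>\<^bsub>A\<^esub> a) \<otimes>\<^bsub>A\<^esub> b" using a b y a(3) by (simp add: A.m_assoc[symmetric])
    have e3: "(y \<otimes>\<^bsub>A\<^esub> a) \<otimes>\<^bsub>A\<^esub> b = y \<otimes>\<^bsub>A\<^esub> (a \<otimes>\<^bsub>A\<^esub> b)" using a b y by (simp add: A.m_assoc)
    have "a \<otimes>\<^bsub>A\<^esub> b \<otimes>\<^bsub>A\<^esub> y = y \<otimes>\<^bsub>A\<^esub> (a \<otimes>\<^bsub>A\<^esub> b)" using e1 e2 e3 by simp
    then show "a \<otimes>\<^bsub>A\<^esub> b \<in> K" using mB[OF a(1) b(1)] unfolding K_def by simp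
  qed
  have wK: "(y \<otimes>\<^bsub>A\<^esub> y) \<otimes>\<^bsub>A\<^esub> \<phi> c \<in> K" if c: "c \<in> B" for c
  proof -
    define x where "x = y \<otimes>\<^bsub>A\<^esub> c"
    define w where "w = x \<otimes>\<^bsub>A\<^esub> x"
    have cA: "c \<in> carrier A" using c BinA by blast
    have xA: "x \<in> carrier A" using cA y x_def by simp
    have wB: "w \<in> B" using sqid[OF c] mB[OF ysq pB[OF c]] w_def x_def by simp
    have wA: "w \<in> carrier A" using wB BinA by blast
    have yx: "y = x \<otimes>\<^bsub>A\<^esub> inv\<^bsub>A\<^esub> c" using cA y x_def by (simp add: A.m_assoc)
    have "w \<otimes>\<^bsub>A\<^esub> y = (w \<otimes>\<^bsub>A\<^esub> x) \<otimes>\<^bsub>A\<^esub> inv\<^bsub>A\<^esub> c" using yx wA xA cA by (simp add: A.m_assoc)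
    also have "\<dots> = x \<otimes>\<^bsub>A\<^esub> (w \<otimes>\<^bsub>A\<^esub> inv\<^bsub>A\<^esub> c)" using xA cA w_def by (simp add: A.m_assoc)
    also have "\<dots> = x \<otimes>\<^bsub>A\<^esub> (inv\<^bsub>A\<^esub> c \<otimes>\<^bsub>A\<^esub> w)" using comm[OF wB iB[OF c]] by simp
    also have "\<dots> = y \<otimes>\<^bsub>A\<^esub> w" using yx wA xA cA by (simp add: A.m_assoc)
    finally have "w \<in> K" using wB unfolding K_def by simp
    then show ?thesis using sqid[OF c] w_def x_def by simp
  qed
  define I where "I = kernel (A\<lparr>carrier := B\<rparr>) (A\<lparr>carrier := B\<rparr>) \<phi>"
  define N where "N = \<phi> ` B"
  have NB: "N \<subseteq> B" using pB N_def by blast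
  have finBG: "finite (carrier (A\<lparr>carrier := B\<rparr>))" using finB by simp
  have fib: "(\<Sum>c\<in>B. F (\<phi> c)) = card I * (\<Sum>z\<in>N. F z)" for F :: "'a \<Rightarrow> nat"
    using hom_fiber_sum[OF BG.is_group BG.is_group finBG phom, of F] I_def N_def by simp
  have cIN: "n = card I * card N" using fib[of "\<lambda>_. 1"] n_def by simp
  have N0: "card N > 0" using cIN n0 by simp
  define sq where "sq = (\<lambda>k. k \<otimes>\<^bsub>A\<^esub> k)"
  interpret KG: group "A\<lparr>carrier := K\<rparr>" using sK subgroup.subgroup_is_group grp by blast
  have sqhom: "sq \<in> hom (A\<lparr>carrier := K\<rparr>) (A\<lparr>carrier := K\<rparr>)"
    using comm_sub[OF sK grp _ sq_def] comm KB by blast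
  have finK: "finite K" using finB KB finite_subset by blast
  have cK: "card K = card (kernel (A\<lparr>carrier := K\<rparr>) (A\<lparr>carrier := K\<rparr>) sq) * card (sq ` K)"
    using hom_fiber_sum[OF KG.is_group KG.is_group _ sqhom, of "\<lambda>_. 1"] finK by simp
  have "kernel (A\<lparr>carrier := K\<rparr>) (A\<lparr>carrier := K\<rparr>) sq \<subseteq> {t\<in>B. t \<otimes>\<^bsub>A\<^esub> t = \<one>\<^bsub>A\<^esub>}"
    using KB unfolding kernel_def sq_def by auto
  then have "card (kernel (A\<lparr>carrier := K\<rparr>) (A\<lparr>carrier := K\<rparr>) sq) \<le> card {t\<in>B. t \<otimes>\<^bsub>A\<^esub> t = \<one>\<^bsub>A\<^esub>}"
    by (rule card_mono[rotated]) (use finB in simp)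
  then have "card (kernel (A\<lparr>carrier := K\<rparr>) (A\<lparr>carrier := K\<rparr>) sq) \<le> 2"
    using cyc_sq[OF grp gA g(2) n0 g(3)] by linarith
  moreover have "sq ` K \<subseteq> N"
  proof
    fix z assume "z \<in> sq ` K"
    then obtain k where k: "k \<in> K" "z = sq k" by blast
    then have kB: "k \<in> B" and kA: "k \<in> carrier A" and ky: "k \<otimes>\<^bsub>A\<^esub> y = y \<otimes>\<^bsub>A\<^esub> k" using BinA unfolding K_def by auto
    have "\<alpha> k = inv\<^bsub>A\<^esub> y \<otimes>\<^bsub>A\<^esub> (k \<otimes>\<^bsub>A\<^esub> y)" using kA y \<alpha>_def by (simp add: A.m_assoc)
    also have "\<dots> = k" using ky kA y by (simp add: A.m_assoc[symmetric])
    finally have "\<phi> k = z" using k \<phi>_def sq_def by simp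
    then show "z \<in> N" using kB N_def by blast
  qed
  then have "card (sq ` K) \<le> card N" by (rule card_mono[rotated]) (use finB NB finite_subset in blast)
  ultimately have KN: "card K \<le> 2 * card N" using cK by (metis mult_le_mono)
  define SB where "SB = (\<Sum>u\<in>B. A.ord u)"
  define SK where "SK = (\<Sum>v\<in>K. A.ord v)"
  have cs: "n * SK \<le> card K * SB" using cyc_sub[OF grp gA g(2) n0 g(3) sB sK KB] SK_def SB_def by simp
  have "card N * (card I * SK) = n * SK" using cIN by simp
  also have "\<dots> \<le> card K * SB" by (rule cs)
  also have "\<dots> \<le> (2 * card N) * SB" using KN by simp
  finally have "card N * (card I * SK) \<le> card N * (2 * SB)" by simp
  then have IK: "card I * SK \<le> 2 * SB" using N0 by simp
  have shift: "(\<Sum>z\<in>N. A.ord ((y \<otimes>\<^bsub>A\<^esub> y) \<otimes>\<^bsub>A\<^esub> z)) \<le> SK"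
  proof -
    have inj2: "inj_on (\<lambda>z. (y \<otimes>\<^bsub>A\<^esub> y) \<otimes>\<^bsub>A\<^esub> z) N"
      by (rule inj_onI) (use NB BinA ysq A.l_cancel in blast)
    have im: "(\<lambda>z. (y \<otimes>\<^bsub>A\<^esub> y) \<otimes>\<^bsub>A\<^esub> z) ` N \<subseteq> K" using wK N_def by blast
    have "(\<Sum>z\<in>N. A.ord ((y \<otimes>\<^bsub>A\<^esub> y) \<otimes>\<^bsub>A\<^esub> z)) = (\<Sum>w\<in>(\<lambda>z. (y \<otimes>\<^bsub>A\<^esub> y) \<otimes>\<^bsub>A\<^esub> z) ` N. A.ord w)"
      using inj2 by (simp add: sum.reindex)
    also have "\<dots> \<le> SK" unfolding SK_def using im finK by (intro sum_mono2) auto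
    finally show ?thesis .
  qed
  have "(\<Sum>c\<in>B. A.ord (y \<otimes>\<^bsub>A\<^esub> c)) \<le> (\<Sum>c\<in>B. 2 * A.ord ((y \<otimes>\<^bsub>A\<^esub> y) \<otimes>\<^bsub>A\<^esub> \<phi> c))"
  proof (rule sum_mono)
    fix c assume c: "c \<in> B"
    show "A.ord (y \<otimes>\<^bsub>A\<^esub> c) \<le> 2 * A.ord ((y \<otimes>\<^bsub>A\<^esub> y) \<otimes>\<^bsub>A\<^esub> \<phi> c)"
      using ord_sq[OF grp fin, of "y \<otimes>\<^bsub>A\<^esub> c"] sqid[OF c] c y BinA by simp
  qed
  also have "\<dots> = 2 * (card I * (\<Sum>z\<in>N. A.ord ((y \<otimes>\<^bsub>A\<^esub> y) \<otimes>\<^bsub>A\<^esub> z)))"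
    using fib[of "\<lambda>z. A.ord ((y \<otimes>\<^bsub>A\<^esub> y) \<otimes>\<^bsub>A\<^esub> z)"] by (simp add: sum_distrib_left[symmetric])
  also have "\<dots> \<le> 2 * (card I * SK)" using shift by simp
  also have "\<dots> \<le> 4 * SB" using IK by (simp add: mult.commute)
  finally have S4: "(\<Sum>c\<in>B. A.ord (y \<otimes>\<^bsub>A\<^esub> c)) \<le> 4 * SB" .
  have "psi A = (\<Sum>u\<in>B \<union> yB. A.ord u)" unfolding psi_def using part by simp
  also have "\<dots> = SB + (\<Sum>u\<in>yB. A.ord u)"
    using sum.union_disjoint[OF finB _ disj] yBs fin finite_subset SB_def by metis
  also have "(\<Sum>u\<in>yB. A.ord u) = (\<Sum>c\<in>B. A.ord (y \<otimes>\<^bsub>A\<^esub> c))"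
    unfolding yB_def using injy by (simp add: sum.reindex)
  finally have "psi A \<le> SB + 4 * SB" using S4 by simp
  moreover have "psi (A\<lparr>carrier := B\<rparr>) = SB" using psi_sub[OF grp sB] SB_def by simp
  ultimately show ?thesis by simp
qed

theorem lemma3p14:
  fixes A :: "('a, 'b) monoid_scheme" and B :: "'a set" and m :: nat
  assumes "group A" and "finite (carrier A)" and "card (carrier A) > 1"
    and "odd m" and "m > 0" and "coprime (card (carrier A)) m"
    and "maximal_subgroup B A"
    and "\<forall>B'. maximal_subgroup B' A \<longrightarrow> psi (A\<lparr>carrier := B'\<rparr>) \<le> psi (A\<lparr>carrier := B\<rparr>)"
  shows
   "(real (psi A) / real (psi (A\<lparr>carrier := B\<rparr>)) \<le> 7 \<longrightarrow>
      maximal_subgroup (B \<times> carrier (Cyc m)) (A \<times>\<times> Cyc m) \<and>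
      (\<forall>H. maximal_subgroup H (A \<times>\<times> Cyc m) \<longrightarrow>
          psi ((A \<times>\<times> Cyc m)\<lparr>carrier := H\<rparr>) \<le> psi ((A \<times>\<times> Cyc m)\<lparr>carrier := B \<times> carrier (Cyc m)\<rparr>)) \<and>
      (\<forall>H. subgroup H (A \<times>\<times> Cyc m) \<and> H \<noteq> carrier (A \<times>\<times> Cyc m) \<longrightarrow>
          psi ((A \<times>\<times> Cyc m)\<lparr>carrier := H\<rparr>) \<le> psi ((A \<times>\<times> Cyc m)\<lparr>carrier := B \<times> carrier (Cyc m)\<rparr>)))
    \<and>
    (cyclic_group (A\<lparr>carrier := B\<rparr>) \<and> card (carrier A) = 2 * card B \<longrightarrow>
      real (psi A) / real (psi (A\<lparr>carrier := B\<rparr>)) \<le> 7 \<and>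
      maximal_subgroup (B \<times> carrier (Cyc m)) (A \<times>\<times> Cyc m) \<and>
      (\<forall>H. maximal_subgroup H (A \<times>\<times> Cyc m) \<longrightarrow>
          psi ((A \<times>\<times> Cyc m)\<lparr>carrier := H\<rparr>) \<le> psi ((A \<times>\<times> Cyc m)\<lparr>carrier := B \<times> carrier (Cyc m)\<rparr>)) \<and>
      (\<forall>H. subgroup H (A \<times>\<times> Cyc m) \<and> H \<noteq> carrier (A \<times>\<times> Cyc m) \<longrightarrow>
          psi ((A \<times>\<times> Cyc m)\<lparr>carrier := H\<rparr>) \<le> psi ((A \<times>\<times> Cyc m)\<lparr>carrier := B \<times> carrier (Cyc m)\<rparr>)))"
proof -
  interpret A: group A by fact
  have sB: "subgroup B A" using assms(7) unfolding maximal_subgroup_def by blast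
  have Bs: "B \<subseteq> carrier A" using sB subgroup.subset by blast
  have finB: "finite B" using assms(2) Bs finite_subset by blast
  have oneB: "\<one>\<^bsub>A\<^esub> \<in> B" using sB subgroup.one_closed by blast
  have "psi (A\<lparr>carrier := B\<rparr>) = (\<Sum>x\<in>B. A.ord x)" using psi_sub[OF assms(1) sB] .
  moreover have "A.ord \<one>\<^bsub>A\<^esub> \<le> (\<Sum>x\<in>B. A.ord x)" using member_le_sum[OF oneB, of "A.ord"] finB by simp
  ultimately have pB: "psi (A\<lparr>carrier := B\<rparr>) > 0" by simp
  have conv: "real (psi A) / real (psi (A\<lparr>carrier := B\<rparr>)) \<le> 7 \<longleftrightarrow> psi A \<le> 7 * psi (A\<lparr>carrier := B\<rparr>)"
  proof -
    have "real (psi A) / real (psi (A\<lparr>carrier := B\<rparr>)) \<le> 7 \<longleftrightarrow> real (psi A) \<le> 7 * real (psi (A\<lparr>carrier := B\<rparr>))"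
      using pB by (simp add: pos_divide_le_eq)
    also have "\<dots> \<longleftrightarrow> psi A \<le> 7 * psi (A\<lparr>carrier := B\<rparr>)" by linarith
    finally show ?thesis .
  qed
  note PI = part_i[OF assms(1) assms(2) assms(4) assms(5) assms(6) assms(7) assms(8)]
  show ?thesis
  proof (rule conjI; rule impI)
    assume "real (psi A) / real (psi (A\<lparr>carrier := B\<rparr>)) \<le> 7"
    then show "maximal_subgroup (B \<times> carrier (Cyc m)) (A \<times>\<times> Cyc m) \<and>
      (\<forall>H. maximal_subgroup H (A \<times>\<times> Cyc m) \<longrightarrow>
          psi ((A \<times>\<times> Cyc m)\<lparr>carrier := H\<rparr>) \<le> psi ((A \<times>\<times> Cyc m)\<lparr>carrier := B \<times> carrier (Cyc m)\<rparr>)) \<and>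
      (\<forall>H. subgroup H (A \<times>\<times> Cyc m) \<and> H \<noteq> carrier (A \<times>\<times> Cyc m) \<longrightarrow>
          psi ((A \<times>\<times> Cyc m)\<lparr>carrier := H\<rparr>) \<le> psi ((A \<times>\<times> Cyc m)\<lparr>carrier := B \<times> carrier (Cyc m)\<rparr>))"
      using PI conv by blast
  next
    assume h: "cyclic_group (A\<lparr>carrier := B\<rparr>) \<and> card (carrier A) = 2 * card B"
    have "psi A \<le> 5 * psi (A\<lparr>carrier := B\<rparr>)" using part_ii[OF assms(1) assms(2) sB] h by blast
    then have le7: "psi A \<le> 7 * psi (A\<lparr>carrier := B\<rparr>)" by linarith
    then have "real (psi A) / real (psi (A\<lparr>carrier := B\<rparr>)) \<le> 7" using conv by blast
    then show "real (psi A) / real (psi (A\<lparr>carrier := B\<rparr>)) \<le> 7 \<and> maximal_subgroup (B \<times> carrier (Cyc m)) (A \<times>\<times> Cyc m) \<and>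
      (\<forall>H. maximal_subgroup H (A \<times>\<times> Cyc m) \<longrightarrow>
          psi ((A \<times>\<times> Cyc m)\<lparr>carrier := H\<rparr>) \<le> psi ((A \<times>\<times> Cyc m)\<lparr>carrier := B \<times> carrier (Cyc m)\<rparr>)) \<and>
      (\<forall>H. subgroup H (A \<times>\<times> Cyc m) \<and> H \<noteq> carrier (A \<times>\<times> Cyc m) \<longrightarrow>
          psi ((A \<times>\<times> Cyc m)\<lparr>carrier := H\<rparr>) \<le> psi ((A \<times>\<times> Cyc m)\<lparr>carrier := B \<times> carrier (Cyc m)\<rparr>))"
      using PI le7 by blast
  qed
qed

end
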